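(* Every Menger proper $K$-analytic space is $\sigma$-compact.
   Context: All spaces are completely regular. A space is analytic if it is a continuous image of the space $\mathbb{P}$ of irrationals. A space is proper $K$-analytic if it admits a perfect map (continuous closed surjection with compact fibers) onto an analytic subspace of $\mathbb{R}^\omega$. $X$ is Menger if for every sequence $(\mathcal{U}_n)_{n<\omega}$ of open covers there are finite $\mathcal{V}_n\subseteq\mathcal{U}_n$ with $\bigcup_n\mathcal{V}_n$ covering $X$. *)

theory Defs
  imports "HOL-Analysis.Analysis"
begin

definition irrationals_space :: "real topology" where
  "irrationals_space = subtopology euclideanreal (- \<rat>)"

definition analytic_space :: "'a topology \<Rightarrow> bool" where
  "analytic_space X \<longleftrightarrow> topspace X = {} \<or>
     (\<exists>f. continuous_map irrationals_space X f \<and> f ` topspace irrationals_space = topspace X)"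

definition R_omega :: "(nat \<Rightarrow> real) topology" where
  "R_omega = product_topology (\<lambda>_. euclideanreal) UNIV"

definition proper_K_analytic :: "'a topology \<Rightarrow> bool" where
  "proper_K_analytic X \<longleftrightarrow>
     (\<exists>A f. A \<subseteq> topspace R_omega \<and> analytic_space (subtopology R_omega A) \<and>
            perfect_map X (subtopology R_omega A) f)"

definition open_cover :: "'a topology \<Rightarrow> 'a set set \<Rightarrow> bool" where
  "open_cover X \<U> \<longleftrightarrow> (\<forall>U\<in>\<U>. openin X U) \<and> topspace X \<subseteq> \<Union>\<U>"

definition menger_space :: "'a topology \<Rightarrow> bool" where
  "menger_space X \<longleftrightarrow>
     (\<forall>\<U> :: nat \<Rightarrow> 'a set set. (\<forall>n. open_cover X (\<U> n)) \<longrightarrow>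
        (\<exists>\<V>. (\<forall>n. finite (\<V> n) \<and> \<V> n \<subseteq> \<U> n) \<and> topspace X \<subseteq> \<Union>(\<Union>n. \<V> n)))"

definition sigma_compact_space :: "'a topology \<Rightarrow> bool" where
  "sigma_compact_space X \<longleftrightarrow>
     (\<exists>K :: nat \<Rightarrow> 'a set. (\<forall>n. compactin X (K n)) \<and> topspace X = (\<Union>n. K n))"

end

theory Submission
  imports Defs
begin

definition good :: "(real \<Rightarrow> 'b::topological_space) \<Rightarrow> 'b set \<Rightarrow> real set \<Rightarrow> bool" where
  "good h A S \<longleftrightarrow> (\<exists>C::nat \<Rightarrow> 'b set. (\<forall>n. compact (C n) \<and> C n \<subseteq> A) \<and> h ` S \<subseteq> (\<Union>n. C n))"

lemma good_mono: "good h A T \<Longrightarrow> S \<subseteq> T \<Longrightarrow> good h A S"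
  unfolding good_def by blast

lemma good_Union:
  assumes "countable W" "\<And>S. S \<in> W \<Longrightarrow> good h A S"
  shows "good h A (\<Union>W)"
proof (cases "W = {}")
  case True
  then show ?thesis unfolding good_def by (intro exI[of _ "\<lambda>_. {}"]) auto
next
  case False
  define E where "E = from_nat_into W"
  have rE: "range E = W" using False assms(1) by (simp add: E_def)
  have "\<forall>i. \<exists>C::nat \<Rightarrow> _. (\<forall>n. compact (C n) \<and> C n \<subseteq> A) \<and> h ` (E i) \<subseteq> (\<Union>n. C n)"
    using assms(2) rE unfolding good_def by blast
  then obtain CC :: "nat \<Rightarrow> nat \<Rightarrow> _" where CC: "\<And>i. (\<forall>n. compact (CC i n) \<and> CC i n \<subseteq> A) \<and> h ` (E i) \<subseteq> (\<Union>n. CC i n)"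
    by metis
  define D where "D n = (case prod_decode n of (i, j) \<Rightarrow> CC i j)" for n
  have "compact (D n) \<and> D n \<subseteq> A" for n
    using CC by (auto simp: D_def split: prod.splits)
  moreover have "h ` (\<Union>W) \<subseteq> (\<Union>n. D n)"
  proof
    fix y assume "y \<in> h ` (\<Union>W)"
    then obtain x S where "S \<in> W" "x \<in> S" "y = h x" by auto
    then obtain i where "S = E i" using rE by auto
    then obtain j where "y \<in> CC i j" using CC \<open>x \<in> S\<close> \<open>y = h x\<close> by blast
    moreover have "D (prod_encode (i, j)) = CC i j" by (simp add: D_def)
    ultimately show "y \<in> (\<Union>n. D n)" by (metis UN_iff UNIV_I)
  qed
  ultimately show ?thesis unfolding good_def by blast
qed

lemma good_Un: "good h A S \<Longrightarrow> good h A T \<Longrightarrow> good h A (S \<union> T)"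
  using good_Union[of "{S, T}" h A] by auto

definition valid :: "(real \<Rightarrow> 'b::metric_space) \<Rightarrow> 'b set \<Rightarrow> real set \<Rightarrow> real \<times> real \<times> 'b \<Rightarrow> bool" where
  "valid h A F s \<longleftrightarrow> fst s < fst (snd s) \<and> {fst s<..<fst (snd s)} \<inter> F \<noteq> {} \<and>
     snd (snd s) \<in> closure (h ` ({fst s<..<fst (snd s)} \<inter> F)) \<and> snd (snd s) \<notin> A"

definition childok :: "(real \<Rightarrow> 'b::metric_space) \<Rightarrow> 'b set \<Rightarrow> real set \<Rightarrow> real \<Rightarrow> real \<Rightarrow> real \<times> real \<times> 'b \<Rightarrow> real \<times> real \<times> 'b \<Rightarrow> bool" where
  "childok h A F r c s s' \<longleftrightarrow> valid h A F s' \<and> fst s < fst s' \<and> fst (snd s') < fst (snd s) \<and>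
     fst (snd s') - fst s' < r \<and> c \<notin> {fst s'..fst (snd s')} \<and>
     h ` ({fst s'<..<fst (snd s')} \<inter> F) \<subseteq> ball (snd (snd s)) r"

lemma step_exists:
  fixes h :: "real \<Rightarrow> 'b::metric_space"
  assumes F: "F \<subseteq> -\<rat>" and hc: "continuous_on (-\<rat>) h"
    and qpt: "\<And>a b. a < b \<Longrightarrow> {a<..<b} \<inter> F \<noteq> {} \<Longrightarrow> \<exists>q. q \<in> closure (h ` ({a<..<b} \<inter> F)) \<and> q \<notin> A"
    and v: "valid h A F s" and r: "r > 0" and c: "c \<in> \<rat>"
  shows "\<exists>s'. childok h A F r c s s'"
proof -
  obtain a b q where s: "s = (a, b, q)" by (metis prod.exhaust)
  from v have ab: "a < b" and qc: "q \<in> closure (h ` ({a<..<b} \<inter> F))"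
    by (auto simp: valid_def s)
  have "r/2 > 0" using r by simp
  then obtain y where "y \<in> h ` ({a<..<b} \<inter> F)" "dist y q < r/2"
    using qc closure_approachable by metis
  then obtain x where x: "x \<in> {a<..<b}" "x \<in> F" "dist (h x) q < r/2" by auto
  have xq: "x \<in> -\<rat>" using x F by auto
  obtain d where d: "d > 0" "\<And>x'. x' \<in> -\<rat> \<Longrightarrow> dist x' x < d \<Longrightarrow> dist (h x') (h x) < r/2"
    using hc xq \<open>r/2 > 0\<close> unfolding continuous_on_iff by metis
  have xc: "x \<noteq> c" using xq c by auto
  define \<mu> where "\<mu> = min d (min (x - a) (min (b - x) (min \<bar>x - c\<bar> (r/2))))"
  have \<mu>pos: "\<mu> > 0" using d x xc r by (auto simp: \<mu>_def)
  have \<mu>le: "\<mu> \<le> d" "\<mu> \<le> x - a" "\<mu> \<le> b - x" "\<mu> \<le> \<bar>x - c\<bar>" "\<mu> \<le> r / 2"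
    unfolding \<mu>_def by (auto simp: min_def)
  define \<rho> where "\<rho> = \<mu> / 2"
  have \<rho>pos: "\<rho> > 0" using \<mu>pos by (simp add: \<rho>_def)
  have \<rho>le: "\<rho> < d" "\<rho> < x - a" "\<rho> < b - x" "\<rho> < \<bar>x - c\<bar>" "\<rho> \<le> r / 4"
    using \<mu>le \<mu>pos by (auto simp: \<rho>_def)
  obtain q' where q': "q' \<in> closure (h ` ({x - \<rho><..<x + \<rho>} \<inter> F))" "q' \<notin> A"
  proof -
    have "x \<in> {x - \<rho><..<x + \<rho>} \<inter> F" using \<rho>pos x by auto
    then have "{x - \<rho><..<x + \<rho>} \<inter> F \<noteq> {}" by blast
    then show ?thesis using qpt[of "x - \<rho>" "x + \<rho>"] \<rho>pos that by auto
  qed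
  have sub: "h ` ({x - \<rho><..<x + \<rho>} \<inter> F) \<subseteq> ball q r"
  proof
    fix y assume "y \<in> h ` ({x - \<rho><..<x + \<rho>} \<inter> F)"
    then obtain x' where x': "x' \<in> {x - \<rho><..<x + \<rho>}" "x' \<in> F" "y = h x'" by auto
    have "dist x' x < d" using x' \<rho>le by (auto simp: dist_real_def)
    then have "dist (h x') (h x) < r/2" using d x' F by auto
    then have "dist q y < r" using x(3) x'(3) dist_triangle3[of q y "h x"]
      by (simp add: dist_commute)
    then show "y \<in> ball q r" by simp
  qed
  have "childok h A F r c s (x - \<rho>, x + \<rho>, q')"
    unfolding childok_def valid_def s using \<rho>pos \<rho>le q' sub x
    by (auto simp: abs_if split: if_splits)
  then show ?thesis by blast
qed

lemma child_dist:
  fixes h :: "real \<Rightarrow> 'b::metric_space"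
  assumes "valid h A F s'" "childok h A F r c s s'"
  shows "dist (snd (snd s)) (snd (snd s')) \<le> r"
proof -
  have "snd (snd s') \<in> closure (h ` ({fst s'<..<fst (snd s')} \<inter> F))"
    using assms(1) by (simp add: valid_def)
  also have "\<dots> \<subseteq> closure (ball (snd (snd s)) r)"
    using assms(2) by (intro closure_mono) (simp add: childok_def)
  also have "\<dots> \<subseteq> cball (snd (snd s)) r"
    by (intro closure_minimal) auto
  finally show ?thesis by simp
qed

lemma S_closed:
  fixes h :: "real \<Rightarrow> 'b::metric_space" and nd :: "nat list \<Rightarrow> real \<times> real \<times> 'b"
  assumes V: "\<And>t. valid h A F (nd t)"
    and C: "\<And>m t. childok h A F (1 / (real (length t) + real (sum_list (m # t)) + 1)) (enum (length t)) (nd t) (nd (m # t))"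
  shows "closed ((\<lambda>t. snd (snd (nd t))) ` {t. length t \<le> n})"
proof (induction n)
  case 0
  have "{t::nat list. length t \<le> 0} = {[]}" by auto
  then show ?case by simp
next
  case (Suc n)
  define qq where "qq t = snd (snd (nd t))" for t
  define T where "T = qq ` {t. length t = Suc n}"
  have IH: "closed (qq ` {t. length t \<le> n})" using Suc by (simp add: qq_def)
  have eq: "(\<lambda>t. snd (snd (nd t))) ` {t. length t \<le> Suc n} = qq ` {t. length t \<le> n} \<union> T"
    by (auto simp: T_def qq_def le_Suc_eq)
  have "z \<in> qq ` {t. length t \<le> n}" if zT: "z islimpt T" for z
  proof -
    have "z \<in> closure (qq ` {t. length t \<le> n})"
      unfolding closure_approachable
    proof (intro allI impI)
      fix e :: real assume e: "e > 0"
      obtain N :: nat where N: "inverse (real (Suc N)) < e/2"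
        using e using reals_Archimedean[of "e/2"] by auto
      have inf: "infinite (T \<inter> ball z (e/2))"
        using zT e by (simp add: islimpt_eq_infinite_ball)
      have "\<exists>t. length t = Suc n \<and> qq t \<in> ball z (e/2) \<and> N < sum_list t"
      proof (rule ccontr)
        assume nt: "\<not> ?thesis"
        have "T \<inter> ball z (e/2) \<subseteq> qq ` {t. set t \<subseteq> {..N} \<and> length t = Suc n}"
        proof
          fix y assume "y \<in> T \<inter> ball z (e/2)"
          then obtain t where tt: "length t = Suc n" "y = qq t" "qq t \<in> ball z (e/2)" unfolding T_def by auto
          then have "sum_list t \<le> N" using nt by (auto simp: not_less)
          then have "set t \<subseteq> {..N}" using member_le_sum_list[of _ t] by fastforce
          then show "y \<in> qq ` {t. set t \<subseteq> {..N} \<and> length t = Suc n}" using tt by auto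
        qed
        moreover have "finite (qq ` {t. set t \<subseteq> {..N} \<and> length t = Suc n})"
          by (intro finite_imageI finite_lists_length_eq) simp
        ultimately show False using inf finite_subset by blast
      qed
      then obtain t where t: "length t = Suc n" "qq t \<in> ball z (e/2)" "N < sum_list t" by blast
      then obtain m t' where t': "t = m # t'" by (cases t) auto
      have ln: "length t' = n" using t t' by simp
      define r where "r = 1 / (real (length t') + real (sum_list (m # t')) + 1)"
      have "dist (qq t') (qq t) \<le> r"
        unfolding qq_def t' r_def by (rule child_dist[OF V C])
      moreover have "r \<le> inverse (real (Suc N))"
      proof -
        have "real (Suc N) \<le> real (length t') + real (sum_list (m # t')) + 1"
          using t(3) t' by simp
        then show ?thesis unfolding r_def by (simp add: inverse_eq_divide frac_le)
      qed
      ultimately have "dist (qq t') (qq t) < e/2" using N by linarith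
      moreover have "dist (qq t) z < e/2" using t(2) by (simp add: dist_commute)
      ultimately have "dist (qq t') z < e" using dist_triangle[of "qq t'" z "qq t"] by linarith
      moreover have "qq t' \<in> qq ` {t. length t \<le> n}" using ln by auto
      ultimately show "\<exists>y\<in>qq ` {t. length t \<le> n}. dist y z < e" by blast
    qed
    then show ?thesis using IH closure_closed by auto
  qed
  then have "closed (qq ` {t. length t \<le> n} \<union> T)"
    using IH unfolding closed_limpt islimpt_Un by blast
  then show ?case using eq by simp
qed

lemma path_point:
  fixes h :: "real \<Rightarrow> 'b::metric_space" and nd :: "nat list \<Rightarrow> real \<times> real \<times> 'b"
  assumes V: "\<And>t. valid h A F (nd t)"
    and C: "\<And>m t. childok h A F (1 / (real (length t) + real (sum_list (m # t)) + 1)) (enum (length t)) (nd t) (nd (m # t))"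
    and enumS: "\<And>x. x \<in> \<rat> \<Longrightarrow> \<exists>k. enum k = x"
    and U: "open U" and Fdef: "\<And>x. x \<in> F \<longleftrightarrow> x \<notin> \<rat> \<and> x \<notin> U"
  shows "\<exists>x\<in>F. \<forall>n. dist (snd (snd (nd (rev (map g [0..<n]))))) (h x) < 1 / (real (g n) + 1)"
proof -
  define pth where "pth n = rev (map g [0..<n])" for n
  have pS: "pth (Suc n) = g n # pth n" for n by (simp add: pth_def)
  have pl: "length (pth n) = n" for n by (simp add: pth_def)
  define aa where "aa n = fst (nd (pth n))" for n
  define bb where "bb n = fst (snd (nd (pth n)))" for n
  define qq where "qq n = snd (snd (nd (pth n)))" for n
  define r where "r n = 1 / (real n + real (sum_list (pth (Suc n))) + 1)" for n
  have Cn: "childok h A F (r n) (enum n) (nd (pth n)) (nd (pth (Suc n)))" for n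
    using C[where m="g n" and t="pth n"] by (simp add: r_def pS pl)
  have a_lt: "aa n < aa (Suc n)" and b_lt: "bb (Suc n) < bb n"
    and len: "bb (Suc n) - aa (Suc n) < r n" and en: "enum n \<notin> {aa (Suc n)..bb (Suc n)}"
    and hb: "h ` ({aa (Suc n)<..<bb (Suc n)} \<inter> F) \<subseteq> ball (qq n) (r n)" for n
    using Cn[of n] by (simp_all add: childok_def aa_def bb_def qq_def)
  have ab: "aa n < bb n" and ne: "{aa n<..<bb n} \<inter> F \<noteq> {}" for n
    using V[of "pth n"] by (simp_all add: valid_def aa_def bb_def)
  have rpos: "r n > 0" for n by (simp add: r_def add_pos_nonneg)
  have r1: "r n \<le> 1 / (real n + 1)" for n
    unfolding r_def by (rule divide_left_mono) auto
  have r2: "r n \<le> 1 / (real (g n) + 1)" for n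
    unfolding r_def pS by (rule divide_left_mono) auto
  have inc: "incseq aa" using a_lt by (intro incseq_SucI) (simp add: less_imp_le)
  have dec: "decseq bb" using b_lt by (intro decseq_SucI) (simp add: less_imp_le)
  have abm: "aa n \<le> bb m" for n m
  proof -
    have "aa n \<le> aa (max n m)" using inc by (simp add: incseq_def)
    also have "\<dots> \<le> bb (max n m)" using ab less_imp_le by blast
    also have "\<dots> \<le> bb m" using dec by (simp add: decseq_def)
    finally show ?thesis .
  qed
  define x where "x = (SUP n. aa n)"
  have bdd: "bdd_above (range aa)" by (rule bdd_aboveI[where M="bb 0"]) (auto intro: abm)
  have ax: "aa n \<le> x" for n unfolding x_def using bdd by (simp add: cSUP_upper)
  have xb: "x \<le> bb m" for m unfolding x_def by (rule cSUP_least) (auto intro: abm)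
  have xin: "x \<in> {aa n<..<bb n}" for n
    using a_lt[of n] ax[of "Suc n"] xb[of "Suc n"] b_lt[of n] by auto
  have xQ: "x \<notin> \<rat>"
  proof
    assume "x \<in> \<rat>"
    then obtain k where "enum k = x" using enumS by blast
    then show False using en[of k] ax[of "Suc k"] xb[of "Suc k"] by auto
  qed
  have xU: "x \<notin> U"
  proof
    assume "x \<in> U"
    then obtain \<epsilon> where \<epsilon>: "\<epsilon> > 0" "\<And>y. dist y x < \<epsilon> \<Longrightarrow> y \<in> U"
      using U unfolding open_dist by metis
    obtain n :: nat where n: "inverse (real (Suc n)) < \<epsilon>" using reals_Archimedean[OF \<epsilon>(1)] by auto
    obtain z where z: "z \<in> {aa (Suc n)<..<bb (Suc n)}" "z \<in> F" using ne[of "Suc n"] by blast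
    have "\<bar>z - x\<bar> < r n" using z(1) xin[of "Suc n"] len[of n] by auto
    also have "\<dots> \<le> inverse (real (Suc n))" using r1[of n] by (simp add: inverse_eq_divide add.commute)
    finally have "dist z x < \<epsilon>" using n by (simp add: dist_real_def)
    then have "z \<in> U" using \<epsilon> by blast
    then show False using z(2) Fdef by blast
  qed
  have xF: "x \<in> F" using xQ xU Fdef by blast
  have "dist (qq n) (h x) < 1 / (real (g n) + 1)" for n
  proof -
    have "h x \<in> ball (qq n) (r n)" using hb[of n] xin[of "Suc n"] xF by blast
    then show ?thesis using r2[of n] by simp
  qed
  then show ?thesis using xF unfolding qq_def pth_def by blast
qed

fun node :: "(nat \<Rightarrow> nat \<Rightarrow> 's \<Rightarrow> 's) \<Rightarrow> 's \<Rightarrow> nat list \<Rightarrow> 's" where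
  "node st s0 [] = s0"
| "node st s0 (m # t) = st (length t) (sum_list (m # t)) (node st s0 t)"

lemma fin_bound:
  fixes \<phi> :: "'b \<Rightarrow> real"
  assumes "finite \<W>" "\<W> \<subseteq> (\<lambda>m::nat. A \<inter> {y. 1 / (real m + 1) < \<phi> y}) ` UNIV"
  shows "\<exists>M::nat. \<forall>W\<in>\<W>. W \<subseteq> {y. 1 / (real M + 1) < \<phi> y}"
proof -
  have "\<forall>W\<in>\<W>. \<exists>m::nat. W = A \<inter> {y. 1 / (real m + 1) < \<phi> y}" using assms(2) by blast
  then obtain f where f: "\<And>W. W \<in> \<W> \<Longrightarrow> W = A \<inter> {y. 1 / (real (f W) + 1) < \<phi> y}" by metis
  obtain M where M: "\<And>k. k \<in> f ` \<W> \<Longrightarrow> k \<le> M"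
    using finite_imageI[OF assms(1), of f] finite_nat_set_iff_bounded_le by metis
  have "W \<subseteq> {y. 1 / (real M + 1) < \<phi> y}" if "W \<in> \<W>" for W
  proof
    fix y assume "y \<in> W"
    then have "1 / (real (f W) + 1) < \<phi> y" using f[OF that] by auto
    moreover have "1 / (real M + 1) \<le> 1 / (real (f W) + 1)"
      using M[of "f W"] that by (intro divide_left_mono) auto
    ultimately show "y \<in> {y. 1 / (real M + 1) < \<phi> y}" by simp
  qed
  then show ?thesis by blast
qed

lemma core:
  fixes h :: "real \<Rightarrow> 'b::metric_space"
  assumes K: "compact K" "A \<subseteq> K" and hc: "continuous_on (-\<rat>) h" and hA: "h ` (-\<rat>) = A"
    and M: "menger_space (top_of_set A)"
  shows "\<exists>C::nat \<Rightarrow> 'b set. (\<forall>n. compact (C n) \<and> C n \<subseteq> A) \<and> A = (\<Union>n. C n)"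
proof -
  define \<V> where "\<V> = {V. open V \<and> good h A (V \<inter> -\<rat>)}"
  define U where "U = \<Union>\<V>"
  have Uo: "open U" by (auto simp: U_def \<V>_def)
  obtain \<V>' where V': "\<V>' \<subseteq> \<V>" "countable \<V>'" "\<Union>\<V>' = \<Union>\<V>"
    using Lindelof[of \<V>] by (auto simp: \<V>_def)
  have "U \<inter> -\<rat> = \<Union>((\<lambda>V. V \<inter> -\<rat>) ` \<V>')" using V'(3) by (auto simp: U_def)
  moreover have "good h A (\<Union>((\<lambda>V. V \<inter> -\<rat>) ` \<V>'))"
    using V'(1,2) by (intro good_Union) (auto simp: \<V>_def)
  ultimately have gU: "good h A (U \<inter> -\<rat>)" by simp
  define F where "F = -\<rat> - U"
  have Fdef: "\<And>x. x \<in> F \<longleftrightarrow> x \<notin> \<rat> \<and> x \<notin> U" by (auto simp: F_def)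
  have FQ: "F \<subseteq> -\<rat>" by (auto simp: F_def)
  show ?thesis
  proof (cases "F = {}")
    case True
    have "-\<rat> \<subseteq> U \<inter> -\<rat>"
    proof
      fix x :: real assume "x \<in> -\<rat>"
      moreover have "x \<notin> F" using True by simp
      ultimately show "x \<in> U \<inter> -\<rat>" using Fdef by blast
    qed
    then have "good h A (-\<rat>)" by (rule good_mono[OF gU])
    then obtain C :: "nat \<Rightarrow> 'b set" where C: "\<forall>n. compact (C n) \<and> C n \<subseteq> A" "h ` (-\<rat>) \<subseteq> (\<Union>n. C n)"
      unfolding good_def by blast
    have "A \<subseteq> (\<Union>n. C n)" using C(2) hA by simp
    moreover have "(\<Union>n. C n) \<subseteq> A" using C(1) by blast
    ultimately have AC: "A = (\<Union>n. C n)" by (rule equalityI)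
    show ?thesis by (rule exI[of _ C], rule conjI[OF C(1) AC])
  next
    case False
    have qpt: "\<exists>q. q \<in> closure (h ` ({a<..<b} \<inter> F)) \<and> q \<notin> A"
      if ab: "a < b" and ne: "{a<..<b} \<inter> F \<noteq> {}" for a b
    proof (rule ccontr)
      assume "\<not> ?thesis"
      then have sub: "closure (h ` ({a<..<b} \<inter> F)) \<subseteq> A" by blast
      have "h ` ({a<..<b} \<inter> F) \<subseteq> K" using FQ hA K(2) by auto
      then have "closure (h ` ({a<..<b} \<inter> F)) \<subseteq> K"
        using K(1) by (intro closure_minimal) (auto intro: compact_imp_closed)
      then have "compact (closure (h ` ({a<..<b} \<inter> F)))"
        using compact_Int_closed[OF K(1) closed_closure, of "h ` ({a<..<b} \<inter> F)"]
        by (simp add: Int_absorb1)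
      then have "good h A ({a<..<b} \<inter> F)"
        unfolding good_def
      proof (intro exI[of _ "\<lambda>_::nat. closure (h ` ({a<..<b} \<inter> F))"] conjI allI)
        show "h ` ({a<..<b} \<inter> F) \<subseteq> (\<Union>n::nat. closure (h ` ({a<..<b} \<inter> F)))"
          using closure_subset[of "h ` ({a<..<b} \<inter> F)"] by simp
      qed (use sub \<open>compact (closure (h ` ({a<..<b} \<inter> F)))\<close> in auto)
      then have "good h A (({a<..<b} \<inter> F) \<union> (U \<inter> -\<rat>))" using gU by (rule good_Un)
      then have "good h A ({a<..<b} \<inter> -\<rat>)" by (rule good_mono) (auto simp: F_def)
      then have "{a<..<b} \<in> \<V>" by (simp add: \<V>_def)
      then have "{a<..<b} \<subseteq> U" by (auto simp: U_def)
      then show False using ne by (auto simp: F_def)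
    qed
    obtain x0 where x0: "x0 \<in> F" using False by blast
    have ne0: "{x0 - 1<..<x0 + 1} \<inter> F \<noteq> {}"
    proof -
      have "x0 \<in> {x0 - 1<..<x0 + 1} \<inter> F" using x0 by simp
      then show ?thesis by blast
    qed
    have lt0: "x0 - 1 < x0 + 1" by simp
    obtain q0 where q0: "q0 \<in> closure (h ` ({x0 - 1<..<x0 + 1} \<inter> F))" "q0 \<notin> A"
      using qpt[OF lt0 ne0] by blast
    define s0 where "s0 = (x0 - 1, x0 + 1, q0)"
    have vs0: "valid h A F s0" unfolding valid_def s0_def fst_conv snd_conv using q0 ne0 lt0 by blast
    define enum where "enum = from_nat_into (\<rat> :: real set)"
    have Qne: "(\<rat> :: real set) \<noteq> {}" using Rats_0 by blast
    have enumQ: "enum k \<in> \<rat>" for k unfolding enum_def using from_nat_into[OF Qne] by blast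
    have enumS: "\<exists>k. enum k = x" if "x \<in> \<rat>" for x
    proof -
      have "x \<in> range enum" using range_from_nat_into[OF Qne countable_rat] that unfolding enum_def by simp
      then show ?thesis by auto
    qed
    define st where "st = (\<lambda>k \<sigma> s. SOME s'. childok h A F (1 / (real k + real \<sigma> + 1)) (enum k) s s')"
    define nd where "nd = node st s0"
    have VC: "valid h A F (nd t) \<and> (\<forall>m. childok h A F (1 / (real (length t) + real (sum_list (m # t)) + 1)) (enum (length t)) (nd t) (nd (m # t)))" for t
    proof (induction t)
      case Nil
      have "valid h A F (nd [])" using vs0 by (simp add: nd_def)
      moreover have "childok h A F (1 / (real (length []) + real (sum_list (m # [])) + 1)) (enum (length [])) (nd []) (nd (m # []))" for m
      proof -
        have "\<exists>s'. childok h A F (1 / (real (length ([]::nat list)) + real (sum_list (m # [])) + 1)) (enum (length ([]::nat list))) (nd []) s'"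
          by (rule step_exists[OF FQ hc qpt]) (auto simp: \<open>valid h A F (nd [])\<close> add_pos_nonneg enumQ)
        then have "childok h A F (1 / (real (length ([]::nat list)) + real (sum_list (m # [])) + 1)) (enum (length ([]::nat list))) (nd []) (st (length ([]::nat list)) (sum_list (m # [])) (nd []))"
          unfolding st_def by (rule someI_ex)
        then show ?thesis by (simp add: nd_def)
      qed
      ultimately show ?case by blast
    next
      case (Cons m t)
      have v: "valid h A F (nd (m # t))" using Cons by (simp add: childok_def)
      moreover have "childok h A F (1 / (real (length (m # t)) + real (sum_list (m' # m # t)) + 1)) (enum (length (m # t))) (nd (m # t)) (nd (m' # m # t))" for m'
      proof -
        have "\<exists>s'. childok h A F (1 / (real (length (m # t)) + real (sum_list (m' # m # t)) + 1)) (enum (length (m # t))) (nd (m # t)) s'"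
          by (rule step_exists[OF FQ hc qpt]) (auto simp: v add_pos_nonneg enumQ)
        then have "childok h A F (1 / (real (length (m # t)) + real (sum_list (m' # m # t)) + 1)) (enum (length (m # t))) (nd (m # t)) (st (length (m # t)) (sum_list (m' # m # t)) (nd (m # t)))"
          unfolding st_def by (rule someI_ex)
        then show ?thesis by (simp add: nd_def)
      qed
      ultimately show ?case by blast
    qed
    have V: "\<And>t. valid h A F (nd t)" using VC by blast
    have C: "\<And>m t. childok h A F (1 / (real (length t) + real (sum_list (m # t)) + 1)) (enum (length t)) (nd t) (nd (m # t))"
      using VC by blast
    define Z where "Z n = (\<lambda>t. snd (snd (nd t))) ` {t. length t \<le> n}" for n
    have Zc: "closed (Z n)" for n unfolding Z_def by (rule S_closed[OF V C])
    have Zne: "Z n \<noteq> {}" for n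
    proof -
      have "snd (snd (nd [])) \<in> Z n" unfolding Z_def by (rule imageI) simp
      then show ?thesis by blast
    qed
    have qA: "snd (snd (nd t)) \<notin> A" for t using V[of t] unfolding valid_def by blast
    have ZA: "Z n \<inter> A = {}" for n unfolding Z_def using qA by blast
    define \<U> where "\<U> n = (\<lambda>m::nat. A \<inter> {y. 1 / (real m + 1) < infdist y (Z n)}) ` UNIV" for n
    have cov: "open_cover (top_of_set A) (\<U> n)" for n
    proof -
      have "openin (top_of_set A) W" if "W \<in> \<U> n" for W
      proof -
        obtain m where "W = A \<inter> {y. 1 / (real m + 1) < infdist y (Z n)}" using \<open>W \<in> \<U> n\<close> by (auto simp: \<U>_def)
        moreover have "open {y. 1 / (real m + 1) < infdist y (Z n)}"
          by (rule open_Collect_less[OF continuous_on_const continuous_on_infdist[OF continuous_on_id]])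
        ultimately show ?thesis by auto
      qed
      moreover have "A \<subseteq> \<Union>(\<U> n)"
      proof
        fix y assume yA: "y \<in> A"
        then have "y \<notin> Z n" using ZA by blast
        then have pos: "infdist y (Z n) > 0" using infdist_pos_not_in_closed[OF Zc Zne] by blast
        obtain m :: nat where "inverse (real (Suc m)) < infdist y (Z n)" using reals_Archimedean[OF pos] by auto
        then have "1 / (real m + 1) < infdist y (Z n)" by (simp add: inverse_eq_divide add.commute)
        then show "y \<in> \<Union>(\<U> n)" using yA by (auto simp: \<U>_def)
      qed
      ultimately show ?thesis by (simp add: open_cover_def)
    qed
    have "\<exists>\<W>. (\<forall>n. finite (\<W> n) \<and> \<W> n \<subseteq> \<U> n) \<and> topspace (top_of_set A) \<subseteq> \<Union>(\<Union>n. \<W> n)"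
      using M cov unfolding menger_space_def by blast
    then obtain \<W> where W: "\<And>n. finite (\<W> n) \<and> \<W> n \<subseteq> \<U> n" "A \<subseteq> \<Union>(\<Union>n. \<W> n)"
      by auto
    have "\<forall>n. \<exists>M::nat. \<forall>W\<in>\<W> n. W \<subseteq> {y. 1 / (real M + 1) < infdist y (Z n)}"
    proof
      fix n show "\<exists>M::nat. \<forall>W\<in>\<W> n. W \<subseteq> {y. 1 / (real M + 1) < infdist y (Z n)}"
        using W(1)[of n] by (intro fin_bound[where A=A]) (auto simp: \<U>_def)
    qed
    then obtain g :: "nat \<Rightarrow> nat" where g: "\<And>n W. W \<in> \<W> n \<Longrightarrow> W \<subseteq> {y. 1 / (real (g n) + 1) < infdist y (Z n)}"
      by (auto dest!: choice)
    obtain x where xF: "x \<in> F" and xd: "\<And>n. dist (snd (snd (nd (rev (map g [0..<n]))))) (h x) < 1 / (real (g n) + 1)"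
      using path_point[OF V C enumS Uo Fdef, of g] by blast
    have "h x \<in> A" using xF FQ hA by auto
    then obtain n W where nW: "W \<in> \<W> n" "h x \<in> W" using W(2) by blast
    then have "1 / (real (g n) + 1) < infdist (h x) (Z n)" using g by blast
    also have "infdist (h x) (Z n) \<le> dist (h x) (snd (snd (nd (rev (map g [0..<n])))))"
      by (rule infdist_le) (auto simp: Z_def)
    finally show ?thesis using xd[of n] by (simp add: dist_commute)
  qed
qed

lemma proj_cont: "continuous_on S (\<lambda>y::nat \<Rightarrow> real. y i)"
proof -
  have "continuous_map (product_topology (\<lambda>_. euclideanreal) UNIV) euclideanreal (\<lambda>y::nat \<Rightarrow> real. y i)"
    by (rule continuous_map_product_projection) simp
  then have "continuous_on UNIV (\<lambda>y::nat \<Rightarrow> real. y i)"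
    by (simp add: euclidean_product_topology)
  then show ?thesis by (rule continuous_on_subset) simp
qed

lemma fun_cont:
  assumes "\<And>i. continuous_on S (\<lambda>x. g x i)"
  shows "continuous_on S (g :: 'a::topological_space \<Rightarrow> nat \<Rightarrow> real)"
proof -
  have "continuous_map (top_of_set S) (product_topology (\<lambda>_. euclideanreal) UNIV) g"
    unfolding continuous_map_componentwise_UNIV using assms by simp
  then show ?thesis by (simp add: euclidean_product_topology)
qed

lemma menger_image:
  assumes M: "menger_space X" and c: "continuous_map X Y g" and s: "g ` topspace X = topspace Y"
  shows "menger_space Y"
  unfolding menger_space_def
proof (intro allI impI)
  fix \<U> :: "nat \<Rightarrow> 'b set set"
  assume cov: "\<forall>n. open_cover Y (\<U> n)"
  define \<U>' where "\<U>' n = (\<lambda>U. {x \<in> topspace X. g x \<in> U}) ` \<U> n" for n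
  have "open_cover X (\<U>' n)" for n
  proof -
    have "openin X W" if "W \<in> \<U>' n" for W
      using that cov c unfolding \<U>'_def open_cover_def by (auto intro: openin_continuous_map_preimage)
    moreover have "topspace X \<subseteq> \<Union>(\<U>' n)"
    proof
      fix x assume x: "x \<in> topspace X"
      then have "g x \<in> topspace Y" using s by blast
      then obtain U where "U \<in> \<U> n" "g x \<in> U" using cov unfolding open_cover_def by blast
      then show "x \<in> \<Union>(\<U>' n)" using x unfolding \<U>'_def by blast
    qed
    ultimately show ?thesis by (simp add: open_cover_def)
  qed
  then obtain \<V>' where V': "\<And>n. finite (\<V>' n) \<and> \<V>' n \<subseteq> \<U>' n" "topspace X \<subseteq> \<Union>(\<Union>n. \<V>' n)"
    using M unfolding menger_space_def by metis
  have "\<forall>n. \<forall>W\<in>\<V>' n. \<exists>U. U \<in> \<U> n \<and> W = {x \<in> topspace X. g x \<in> U}"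
    using V'(1) unfolding \<U>'_def by blast
  then obtain ch where ch: "\<And>n W. W \<in> \<V>' n \<Longrightarrow> ch n W \<in> \<U> n \<and> W = {x \<in> topspace X. g x \<in> ch n W}"
    by metis
  define \<V> where "\<V> n = ch n ` \<V>' n" for n
  have "finite (\<V> n) \<and> \<V> n \<subseteq> \<U> n" for n using V'(1) ch unfolding \<V>_def by auto
  moreover have "topspace Y \<subseteq> \<Union>(\<Union>n. \<V> n)"
  proof
    fix y assume "y \<in> topspace Y"
    then obtain x where x: "x \<in> topspace X" "y = g x" using s by blast
    then obtain n W where "W \<in> \<V>' n" "x \<in> W" using V'(2) by blast
    then have "y \<in> ch n W" "ch n W \<in> \<V> n" using ch[of W n] x unfolding \<V>_def by auto
    then show "y \<in> \<Union>(\<Union>n. \<V> n)" by blast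
  qed
  ultimately show "\<exists>\<V>. (\<forall>n. finite (\<V> n) \<and> \<V> n \<subseteq> \<U> n) \<and> topspace Y \<subseteq> \<Union>(\<Union>n. \<V> n)" by blast
qed

theorem theorem3p23:
  fixes X :: "'a topology"
  assumes "completely_regular_space X"
    and "menger_space X"
    and "proper_K_analytic X"
  shows "sigma_compact_space X"
proof -
  have RE: "R_omega = euclidean" by (simp add: R_omega_def euclidean_product_topology)
  obtain A :: "(nat \<Rightarrow> real) set" and f where Aan: "analytic_space (top_of_set A)" and pf: "perfect_map X (top_of_set A) f"
    using assms(3) unfolding proper_K_analytic_def RE by blast
  have fc: "continuous_map X (top_of_set A) f" and fp: "proper_map X (top_of_set A) f"
    and fs: "f ` topspace X = A"
    using pf unfolding perfect_map_def by auto
  show ?thesis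
  proof (cases "A = {}")
    case True
    then have "topspace X = {}" using fs by auto
    then show ?thesis unfolding sigma_compact_space_def
      by (intro exI[of _ "\<lambda>_. {}"]) auto
  next
    case False
    obtain h0 where h0c: "continuous_map irrationals_space (top_of_set A) h0"
      and h0s: "h0 ` topspace irrationals_space = A"
      using Aan False unfolding analytic_space_def by auto
    have h0c': "continuous_on (-\<rat>) h0" and h0s': "h0 ` (-\<rat>) = A"
      using h0c h0s by (auto simp: irrationals_space_def)
    define e where "e y = (\<lambda>i::nat. arctan (y i))" for y :: "nat \<Rightarrow> real"
    define einv where "einv y = (\<lambda>i::nat. tan (y i))" for y :: "nat \<Rightarrow> real"
    have einv_e: "einv (e y) = y" for y by (simp add: e_def einv_def tan_arctan)
    have ec: "continuous_on S e" for S
      unfolding e_def by (intro fun_cont continuous_on_arctan proj_cont)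
    define K where "K = Pi\<^sub>E UNIV (\<lambda>_::nat. {-(pi/2)..pi/2})"
    have "compactin (product_topology (\<lambda>_. euclideanreal) UNIV) K"
      unfolding K_def compactin_PiE by simp
    then have Kc: "compact K" by (simp add: euclidean_product_topology)
    define A' where "A' = e ` A"
    have AK: "A' \<subseteq> K"
      unfolding A'_def K_def e_def using arctan_bounded by (auto simp: less_imp_le)
    have hc: "continuous_on (-\<rat>) (e \<circ> h0)"
      by (rule continuous_on_compose[OF h0c' ec])
    have hs: "(e \<circ> h0) ` (-\<rat>) = A'" by (simp only: image_comp[symmetric] h0s' A'_def)
    have gc: "continuous_map X (top_of_set A') (e \<circ> f)"
    proof -
      have "continuous_map (top_of_set A) (top_of_set A') e"
        using ec[of A] by (auto simp: A'_def)
      then show ?thesis using fc by (rule continuous_map_compose[rotated])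
    qed
    have gs: "(e \<circ> f) ` topspace X = topspace (top_of_set A')"
      by (simp only: image_comp[symmetric] fs A'_def topspace_euclidean_subtopology)
    have MA': "menger_space (top_of_set A')" by (rule menger_image[OF assms(2) gc gs])
    obtain C :: "nat \<Rightarrow> (nat \<Rightarrow> real) set" where C: "\<forall>n. compact (C n) \<and> C n \<subseteq> A'" "A' = (\<Union>n. C n)"
      using core[OF Kc AK hc hs MA'] by blast
    define D where "D n = einv ` C n" for n
    have Dc: "compact (D n)" for n
    proof -
      have cosne: "cos (y i) \<noteq> 0" if "y \<in> C n" for i y
      proof -
        have "y \<in> A'" using C that by blast
        then obtain a where "y = e a" by (auto simp: A'_def)
        then have "- (pi/2) < y i" "y i < pi/2" using arctan_bounded by (auto simp: e_def)
        then have "0 < cos (y i)" by (rule cos_gt_zero_pi)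
        then show "cos (y i) \<noteq> 0" by simp
      qed
      have "continuous_on (C n) einv"
        unfolding einv_def
      proof (rule fun_cont)
        fix i
        have "continuous_on {t::real. cos t \<noteq> 0} tan"
          by (rule continuous_at_imp_continuous_on) (auto intro: isCont_tan)
        then show "continuous_on (C n) (\<lambda>x. tan (x i))"
          by (rule continuous_on_compose2[OF _ proj_cont]) (auto simp: cosne)
      qed
      then show ?thesis unfolding D_def using C(1) by (intro compact_continuous_image) auto
    qed
    have DA: "D n \<subseteq> A" for n
    proof
      fix z assume "z \<in> D n"
      then obtain y where y: "y \<in> C n" "z = einv y" unfolding D_def by blast
      then have "y \<in> e ` A" using C(1) unfolding A'_def by blast
      then obtain a where "a \<in> A" "y = e a" by blast
      then show "z \<in> A" using y einv_e by simp
    qed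
    have AD: "A \<subseteq> (\<Union>n. D n)"
    proof
      fix a assume "a \<in> A"
      then have "e a \<in> (\<Union>n. C n)" using C(2) by (auto simp: A'_def)
      then obtain n where "e a \<in> C n" by blast
      then have "a \<in> D n" unfolding D_def using einv_e[of a] by (metis imageI)
      then show "a \<in> (\<Union>n. D n)" by blast
    qed
    define E where "E n = {x \<in> topspace X. f x \<in> D n}" for n
    have "compactin X (E n)" for n
      unfolding E_def using compactin_proper_map_preimage[OF fp, of "D n"] Dc DA
      by (simp add: compactin_subtopology)
    moreover have "topspace X = (\<Union>n. E n)"
      using fs AD unfolding E_def by blast
    ultimately show ?thesis unfolding sigma_compact_space_def by blast
  qed
qed

end
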